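(* Let $A\in\mathbb{R}^{m\times n}$ and $b\in\mathbb{R}^m$ be such that the linear system $Ax=b$ is consistent, let $\ell$ be a positive integer, and let $x^0\in\operatorname{Range}(A^\top)$. Let $\{S_k\}_{k\ge 0}\subset\mathbb{R}^{m\times q}$ be matrices and let $\{x^k\}_{k\ge1}$ be defined recursively by $$x^{k+1}=\arg\min_{x\in\Pi_k}\|x-A^\dagger b\|_2^2,\qquad \Pi_k=\operatorname{aff}\{x^{j_k},\ldots,x^k,\;x^k-A^\top S_kS_k^\top(Ax^k-b)\},$$ where $j_k=\max\{k-\ell+1,0\}$. Define $$M_k=\big(x^{j_k}-x^k,\ \ldots,\ x^{k-1}-x^k,\ -A^\top S_kS_k^\top(Ax^k-b)\big)\in\mathbb{R}^{n\times(k-j_k+1)}$$ (when $j_k=k$, $M_k$ consists only of its last column). If $S_i^\top(Ax^i-b)\neq 0$ for $i=0,\ldots,k$, then $M_k$ has full column rank.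
   Context: $A^\dagger$ denotes the Moore–Penrose pseudoinverse of $A$. For vectors $y^1,\dots,y^p$, $\operatorname{aff}\{y^1,\dots,y^p\}=\{\sum_i\alpha_iy^i:\sum_i\alpha_i=1,\ \alpha_i\in\mathbb{R}\}$ is their affine hull. The minimizer of the strictly convex function $\|x-A^\dagger b\|_2^2$ over the affine set $\Pi_k$ is the orthogonal projection of $A^\dagger b$ onto $\Pi_k$. *)

theory Defs
  imports "HOL-Analysis.Analysis"
begin

text \<open>Moore--Penrose pseudoinverse: the unique matrix satisfying the four Penrose conditions.\<close>
definition pinv :: "real^'n^'m \<Rightarrow> real^'m^'n" where
  "pinv A = (THE X. A ** X ** A = A \<and> X ** A ** X = X \<and>
                    transpose (A ** X) = A ** X \<and> transpose (X ** A) = X ** A)"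

text \<open>j_k = max{k - l + 1, 0} (computed in the integers, then returned as a nat).\<close>
definition jidx :: "nat \<Rightarrow> nat \<Rightarrow> nat" where
  "jidx l k = nat (max (int k - int l + 1) 0)"

text \<open>The sketched-residual direction  A^T S_k S_k^T (A x^k - b).\<close>
definition sdir :: "real^'n^'m \<Rightarrow> real^'m \<Rightarrow> real^'q^'m \<Rightarrow> real^'n \<Rightarrow> real^'n" where
  "sdir A b S xk = transpose A *v ((S ** transpose S) *v (A *v xk - b))"

text \<open>Pi_k = aff{x^{j_k},...,x^k, x^k - A^T S_k S_k^T (A x^k - b)}.\<close>
definition Pi_set :: "real^'n^'m \<Rightarrow> real^'m \<Rightarrow> (nat \<Rightarrow> real^'q^'m) \<Rightarrow> nat \<Rightarrow>
                      (nat \<Rightarrow> real^'n) \<Rightarrow> nat \<Rightarrow> (real^'n) set" where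
  "Pi_set A b S l x k = affine hull
     ((x ` {jidx l k..k}) \<union> {x k - sdir A b (S k) (x k)})"

text \<open>The columns of M_k, in order, as a list of vectors in R^n
  (k - j_k + 1 columns).\<close>
definition Mcols :: "real^'n^'m \<Rightarrow> real^'m \<Rightarrow> (nat \<Rightarrow> real^'q^'m) \<Rightarrow> nat \<Rightarrow>
                      (nat \<Rightarrow> real^'n) \<Rightarrow> nat \<Rightarrow> (real^'n) list" where
  "Mcols A b S l x k = map (\<lambda>j. x j - x k) [jidx l k..<k] @ [- sdir A b (S k) (x k)]"

text \<open>A matrix given by its list of columns has full column rank iff its rank
  (dimension of the column space) equals the number of columns.\<close>
definition full_col_rank :: "(real^'n) list \<Rightarrow> bool" where
  "full_col_rank cols \<longleftrightarrow> dim (span (set cols)) = length cols"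

end

theory Submission imports Defs begin

lemma tA_inner: "inner (transpose A *v u) w = inner u (A *v w)" for A :: "real^'n^'m"
  by (simp add: dot_lmul_matrix)

lemma AtA_zero:
  fixes A :: "real^'n^'m"
  assumes "transpose A *v (A *v v) = 0" shows "A *v v = 0"
proof -
  have "inner (A *v v) (A *v v) = inner v (transpose A *v (A *v v))"
    by (metis tA_inner inner_commute)
  then show ?thesis using assms by simp
qed

lemma Rt_null:
  fixes A :: "real^'n^'m"
  assumes "x \<in> range (\<lambda>u. transpose A *v u)" "A *v x = 0" shows "x = 0"
proof -
  obtain u where u: "x = transpose A *v u" using assms by auto
  have "inner x x = inner u (A *v x)" using u tA_inner by metis
  then show ?thesis using assms by simp
qed

lemma Rt_uniq:
  fixes A :: "real^'n^'m"
  assumes "x \<in> range (\<lambda>u. transpose A *v u)" "x' \<in> range (\<lambda>u. transpose A *v u)"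
    "transpose A *v (A *v x) = transpose A *v (A *v x')"
  shows "x = x'"
proof -
  obtain u u' where u: "x = transpose A *v u" "x' = transpose A *v u'" using assms by auto
  have "x - x' = transpose A *v (u - u')" using u by (simp add: matrix_vector_mult_diff_distrib)
  then have r: "x - x' \<in> range (\<lambda>u. transpose A *v u)" by auto
  have "transpose A *v (A *v (x - x')) = 0" using assms(3)
    by (simp add: matrix_vector_mult_diff_distrib)
  then have "A *v (x - x') = 0" by (rule AtA_zero)
  then have "x - x' = 0" using Rt_null r by blast
  then show ?thesis by simp
qed

lemma range_mv_span: "span (range (\<lambda>u. (M::real^'a^'b) *v u)) = range (\<lambda>u. M *v u)"
proof -
  have "subspace (range (\<lambda>u. M *v u))"
    unfolding subspace_def
    by (metis (no_types, lifting) matrix_vector_mult_0_right matrix_vector_right_distrib matrix_vector_mult_scaleR rangeE rangeI)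
  then show ?thesis by (simp add: span_eq_iff)
qed

lemma Rt_exist:
  fixes A :: "real^'n^'m"
  shows "\<exists>x \<in> range (\<lambda>u. transpose A *v u). transpose A *v (A *v x) = transpose A *v y"
proof -
  obtain y1 y2 where y1: "y1 \<in> span (range (\<lambda>u. A *v u))"
    and y2: "\<And>w. w \<in> span (range (\<lambda>u. A *v u)) \<Longrightarrow> orthogonal y2 w" and y: "y = y1 + y2"
    using orthogonal_subspace_decomp_exists[of "range (\<lambda>u. A *v u)" y] by blast
  obtain v where v: "y1 = A *v v" using y1 range_mv_span by blast
  have "inner (transpose A *v y2) (transpose A *v y2) = inner y2 (A *v (transpose A *v y2))"
    by (rule tA_inner)
  also have "\<dots> = 0"
  proof -
    have "A *v (transpose A *v y2) \<in> span (range (\<lambda>u. A *v u))" by (rule span_base) auto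
    from y2[OF this] show ?thesis by (simp add: orthogonal_def)
  qed
  finally have ty2: "transpose A *v y2 = 0" by simp
  obtain v1 v2 where v1: "v1 \<in> span (range (\<lambda>u. transpose A *v u))"
    and v2: "\<And>w. w \<in> span (range (\<lambda>u. transpose A *v u)) \<Longrightarrow> orthogonal v2 w" and vv: "v = v1 + v2"
    using orthogonal_subspace_decomp_exists[of "range (\<lambda>u. transpose A *v u)" v] by blast
  have "inner (A *v v2) (A *v v2) = inner v2 (transpose A *v (A *v v2))"
    by (metis tA_inner inner_commute)
  also have "\<dots> = 0"
  proof -
    have "transpose A *v (A *v v2) \<in> span (range (\<lambda>u. transpose A *v u))" by (rule span_base) auto
    from v2[OF this] show ?thesis by (simp add: orthogonal_def)
  qed
  finally have av2: "A *v v2 = 0" by simp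
  have "transpose A *v (A *v v1) = transpose A *v y"
    using vv av2 ty2 y v by (simp add: matrix_vector_right_distrib)
  then show ?thesis using v1 range_mv_span by blast
qed

definition pf :: "real^'n^'m \<Rightarrow> real^'m \<Rightarrow> real^'n" where
  "pf A y = (SOME x. x \<in> range (\<lambda>u. transpose A *v u) \<and> transpose A *v (A *v x) = transpose A *v y)"

lemma pf_prop:
  "pf A y \<in> range (\<lambda>u. transpose A *v u) \<and> transpose A *v (A *v pf A y) = transpose A *v y"
  unfolding pf_def by (rule someI_ex) (use Rt_exist in blast)

lemma pf_eq:
  fixes A :: "real^'n^'m"
  assumes "x \<in> range (\<lambda>u. transpose A *v u)" "transpose A *v (A *v x) = transpose A *v y"
  shows "pf A y = x"
  using Rt_uniq[OF conjunct1[OF pf_prop] assms(1)] pf_prop assms(2) by metis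

lemma Rt_add: "x \<in> range (\<lambda>u. (M::real^'a^'b) *v u) \<Longrightarrow> y \<in> range (\<lambda>u. M *v u) \<Longrightarrow> x + y \<in> range (\<lambda>u. M *v u)"
  by (metis (no_types, lifting) matrix_vector_right_distrib rangeE rangeI)

lemma Rt_scale: "x \<in> range (\<lambda>u. (M::real^'a^'b) *v u) \<Longrightarrow> c *\<^sub>R x \<in> range (\<lambda>u. M *v u)"
  by (metis (no_types, lifting) matrix_vector_mult_scaleR rangeE rangeI)

lemma pf_linear: "linear (pf A)"
proof (rule linearI)
  fix a b
  show "pf A (a + b) = pf A a + pf A b"
  proof (rule pf_eq)
    show "pf A a + pf A b \<in> range (\<lambda>u. transpose A *v u)"
      using pf_prop[of A a] pf_prop[of A b] Rt_add by blast
    show "transpose A *v (A *v (pf A a + pf A b)) = transpose A *v (a + b)"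
      using pf_prop[of A a] pf_prop[of A b] by (simp add: matrix_vector_right_distrib)
  qed
next
  fix r b
  show "pf A (r *\<^sub>R b) = r *\<^sub>R pf A b"
  proof (rule pf_eq)
    show "r *\<^sub>R pf A b \<in> range (\<lambda>u. transpose A *v u)"
      using pf_prop[of A b] Rt_scale by blast
    show "transpose A *v (A *v (r *\<^sub>R pf A b)) = transpose A *v (r *\<^sub>R b)"
      using pf_prop[of A b] by (simp add: matrix_vector_mult_scaleR)
  qed
qed

lemma sym_from_inner:
  fixes M :: "real^'n^'n"
  assumes "\<And>y z. inner (M *v y) z = inner (M *v z) y"
  shows "transpose M = M"
proof -
  have "transpose M *v y = M *v y" for y
  proof -
    have "\<forall>z. inner (transpose M *v y) z = inner (M *v y) z"
      using assms tA_inner[of M y] by (metis inner_commute)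
    then show ?thesis using vector_eq_rdot by blast
  qed
  then show ?thesis by (simp add: matrix_eq)
qed


lemma A_inner: "inner (A *v p) w = inner p (transpose A *v w)" for A :: "real^'n^'m"
  using tA_inner[of "transpose A" p w] by simp

definition penrose :: "real^'n^'m \<Rightarrow> real^'m^'n \<Rightarrow> bool" where
  "penrose A X \<longleftrightarrow> A ** X ** A = A \<and> X ** A ** X = X \<and>
                    transpose (A ** X) = A ** X \<and> transpose (X ** A) = X ** A"

lemma pf_mat: "matrix (pf A) *v y = pf A y"
  using matrix_vector_mul(2)[OF pf_linear[of A]] by metis

lemma pf_AXA: "A *v pf A (A *v v) = A *v v" for A :: "real^'n^'m"
proof -
  have "transpose A *v (A *v (pf A (A *v v) - v)) = 0"
    using pf_prop[of A "A *v v"] by (simp add: matrix_vector_mult_diff_distrib)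
  then have "A *v (pf A (A *v v) - v) = 0" by (rule AtA_zero)
  then show ?thesis by (simp add: matrix_vector_mult_diff_distrib)
qed

lemma penrose_exists: "penrose A (matrix (pf A))" for A :: "real^'n^'m"
proof -
  let ?X = "matrix (pf A)"
  have 1: "A ** ?X ** A = A"
    by (simp add: matrix_eq pf_mat pf_AXA flip: matrix_vector_mul_assoc)
  have 2: "?X ** A ** ?X = ?X"
  proof -
    have "pf A (A *v pf A y) = pf A y" for y
      using pf_prop[of A y] by (intro pf_eq) auto
    then show ?thesis by (simp add: matrix_eq pf_mat flip: matrix_vector_mul_assoc)
  qed
  have 3: "transpose (A ** ?X) = A ** ?X"
  proof (rule sym_from_inner)
    have key: "inner (A *v pf A y) z = inner (A *v pf A y) (A *v pf A z)" for y z
    proof -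
      have "inner (A *v pf A y) (z - A *v pf A z) = inner (pf A y) (transpose A *v (z - A *v pf A z))"
        by (rule A_inner)
      also have "\<dots> = 0" using pf_prop[of A z] by (simp add: matrix_vector_mult_diff_distrib)
      finally show ?thesis by (simp add: inner_diff_right)
    qed
    fix y z
    show "inner ((A ** ?X) *v y) z = inner ((A ** ?X) *v z) y"
      using key[of y z] key[of z y] by (simp add: pf_mat inner_commute flip: matrix_vector_mul_assoc)
  qed
  have 4: "transpose (?X ** A) = ?X ** A"
  proof (rule sym_from_inner)
    have key: "inner (pf A (A *v v)) w = inner (pf A (A *v v)) (pf A (A *v w))" for v w
    proof -
      obtain u where u: "pf A (A *v v) = transpose A *v u" using pf_prop[of A "A *v v"] by auto
      have "inner (pf A (A *v v)) (w - pf A (A *v w)) = inner u (A *v (w - pf A (A *v w)))"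
        unfolding u by (rule tA_inner)
      also have "\<dots> = 0" using pf_AXA[of A w] by (simp add: matrix_vector_mult_diff_distrib)
      finally show ?thesis by (simp add: inner_diff_right)
    qed
    fix y z
    show "inner ((?X ** A) *v y) z = inner ((?X ** A) *v z) y"
      using key[of y z] key[of z y] by (simp add: pf_mat inner_commute flip: matrix_vector_mul_assoc)
  qed
  show ?thesis unfolding penrose_def using 1 2 3 4 by blast
qed

lemma penrose_unique:
  fixes A :: "real^'n^'m"
  assumes X: "penrose A X" and Y: "penrose A Y"
  shows "X = Y"
proof -
  from X have X1: "A ** X ** A = A" and X2: "X ** A ** X = X"
    and X3: "transpose (A ** X) = A ** X" and X4: "transpose (X ** A) = X ** A"
    unfolding penrose_def by auto
  from Y have Y1: "A ** Y ** A = A" and Y2: "Y ** A ** Y = Y"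
    and Y3: "transpose (A ** Y) = A ** Y" and Y4: "transpose (Y ** A) = Y ** A"
    unfolding penrose_def by auto
  have "X = X ** (A ** X)" using X2 by (simp add: matrix_mul_assoc)
  also have "\<dots> = X ** (transpose X ** transpose A)" using X3 by (metis matrix_transpose_mul)
  also have "\<dots> = X ** (transpose X ** transpose (A ** Y ** A))" using Y1 by simp
  also have "transpose (A ** Y ** A) = transpose A ** (A ** Y)"
    using Y3 by (simp add: matrix_transpose_mul)
  also have "X ** (transpose X ** (transpose A ** (A ** Y))) = X ** (transpose (A ** X) ** (A ** Y))"
    by (simp add: matrix_transpose_mul matrix_mul_assoc)
  also have "\<dots> = (X ** A ** X) ** A ** Y" using X3 by (simp add: matrix_mul_assoc)
  also have "\<dots> = X ** A ** Y" using X2 by simp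
  finally have ex: "X = X ** A ** Y" .
  have "Y = (Y ** A) ** Y" using Y2 by simp
  also have "\<dots> = (transpose A ** transpose Y) ** Y" using Y4 by (metis matrix_transpose_mul)
  also have "\<dots> = (transpose (A ** X ** A) ** transpose Y) ** Y" using X1 by simp
  also have "transpose (A ** X ** A) = (X ** A) ** transpose A"
    using X4 by (metis matrix_mul_assoc matrix_transpose_mul)
  also have "((X ** A) ** transpose A) ** transpose Y ** Y = X ** A ** (transpose (Y ** A)) ** Y"
    by (simp add: matrix_transpose_mul matrix_mul_assoc)
  also have "\<dots> = X ** A ** (Y ** A ** Y)" using Y4 by (simp add: matrix_mul_assoc)
  also have "\<dots> = X ** A ** Y" using Y2 by simp
  finally show ?thesis using ex by simp
qed

lemma pinv_penrose: "penrose A (pinv A)" for A :: "real^'n^'m"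
proof -
  have "\<exists>!X. penrose A X" using penrose_exists penrose_unique by blast
  then have "penrose A (THE X. penrose A X)" by (rule theI')
  then show ?thesis unfolding pinv_def penrose_def by simp
qed

lemma pinv_solves:
  fixes A :: "real^'n^'m"
  assumes "\<exists>z. A *v z = b"
  shows "A *v (pinv A *v b) = b"
proof -
  obtain z where z: "A *v z = b" using assms by blast
  have "A ** pinv A ** A = A" using pinv_penrose[of A] unfolding penrose_def by blast
  then have "A *v (pinv A *v (A *v z)) = A *v z"
    by (metis matrix_vector_mul_assoc)
  then show ?thesis using z by simp
qed


lemma quad_zero:
  fixes a bb :: real
  assumes h: "\<And>t. 0 \<le> 2*t*a + t^2*bb" and bb: "bb \<ge> 0"
  shows "a = 0"
proof -
  define t where "t = - a / (bb + 1)"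
  have pos: "bb + 1 > 0" using bb by simp
  have "0 \<le> (2*t*a + t^2*bb) * (bb+1)^2" using h[of t] pos by simp
  also have "(2*t*a + t^2*bb) * (bb+1)^2 = 2*a*(t*(bb+1))*(bb+1) + (t*(bb+1))^2*bb"
    by (simp add: power2_eq_square algebra_simps)
  also have "t*(bb+1) = -a" unfolding t_def using pos by simp
  also have "2*a*(-a)*(bb+1) + (-a)^2*bb = - (a^2 * (bb + 2))"
    by (simp add: power2_eq_square algebra_simps)
  finally have "a^2 * (bb + 2) \<le> 0" by simp
  moreover have "bb + 2 > 0" using bb by simp
  ultimately have "a^2 \<le> 0" by (simp add: mult_le_0_iff)
  then show ?thesis by simp
qed

lemma argmin_orth:
  fixes c xs :: "real^'n"
  assumes am: "is_arg_min (\<lambda>z. (norm (z - c))\<^sup>2) (\<lambda>z. z \<in> P) xs" and aff: "affine P"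
    and y: "y \<in> P"
  shows "inner (y - xs) (xs - c) = 0"
proof -
  have xs: "xs \<in> P" and mn: "\<And>z. z \<in> P \<Longrightarrow> \<not> (norm (z - c))\<^sup>2 < (norm (xs - c))\<^sup>2"
    using am unfolding is_arg_min_def by auto
  define v where "v = y - xs"
  define e where "e = xs - c"
  have "0 \<le> 2*t*inner v e + t^2*inner v v" for t
  proof -
    have "(1 - t) *\<^sub>R xs + t *\<^sub>R y \<in> P" using aff xs y unfolding affine_def by simp
    moreover have "(1 - t) *\<^sub>R xs + t *\<^sub>R y - c = e + t *\<^sub>R v"
      unfolding e_def v_def by (simp add: algebra_simps)
    ultimately have "\<not> (norm (e + t *\<^sub>R v))\<^sup>2 < (norm e)\<^sup>2" using mn e_def by metis
    moreover have "(norm (e + t *\<^sub>R v))\<^sup>2 = (norm e)\<^sup>2 + 2*t*inner v e + t^2*inner v v"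
      unfolding dot_square_norm[symmetric]
      by (simp add: inner_add_left inner_add_right inner_commute power2_eq_square algebra_simps)
    ultimately show ?thesis by simp
  qed
  then have "inner v e = 0" by (rule quad_zero) simp
  then show ?thesis unfolding v_def e_def .
qed

lemma full_rank_crit:
  fixes cols :: "(real^'n) list"
  assumes h: "\<And>a. (\<Sum>i<length cols. a i *\<^sub>R cols!i) = 0 \<Longrightarrow> \<forall>i<length cols. a i = 0"
  shows "full_col_rank cols"
proof -
  let ?n = "length cols"
  have dist: "distinct cols"
  proof (subst distinct_conv_nth, intro allI impI)
    fix i j assume ij: "i < ?n" "j < ?n" "i \<noteq> j"
    show "cols!i \<noteq> cols!j"
    proof
      assume eq: "cols!i = cols!j"
      define a where "a t = (if t = i then 1 else if t = j then -1 else (0::real))" for t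
      have "(\<Sum>t<?n. a t *\<^sub>R cols!t) = (\<Sum>t<?n. (if t = i then cols!i else 0) - (if t = j then cols!j else 0))"
        by (rule sum.cong) (use ij in \<open>auto simp: a_def\<close>)
      also have "\<dots> = cols!i - cols!j" using ij by (simp add: sum_subtractf)
      also have "\<dots> = 0" using eq by simp
      finally have "\<forall>t<?n. a t = 0" by (rule h)
      then show False using ij by (auto simp: a_def)
    qed
  qed
  have ind: "independent (set cols)"
  proof
    assume "dependent (set cols)"
    then obtain u where u: "\<exists>v\<in>set cols. u v \<noteq> 0" "(\<Sum>v\<in>set cols. u v *\<^sub>R v) = 0"
      using dependent_finite[of "set cols"] by auto
    have inj: "inj_on (nth cols) {..<?n}" using dist by (simp add: inj_on_def nth_eq_iff_index_eq)
    have img: "nth cols ` {..<?n} = set cols" by (auto simp: set_conv_nth)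
    have "(\<Sum>i<?n. u (cols!i) *\<^sub>R cols!i) = (\<Sum>v\<in>set cols. u v *\<^sub>R v)"
      using sum.reindex[OF inj, of "\<lambda>v. u v *\<^sub>R v"] img by simp
    then have "\<forall>i<?n. u (cols!i) = 0" using u(2) h by simp
    then show False using u(1) by (auto simp: set_conv_nth)
  qed
  have "dim (span (set cols)) = card (set cols)"
    using ind by (simp add: dim_span dim_eq_card_independent)
  then show ?thesis unfolding full_col_rank_def using dist by (simp add: distinct_card)
qed


lemma jidx_le: "jidx l i \<le> i" if "l > 0" using that unfolding jidx_def by simp
lemma jidx_mono: "i \<le> k \<Longrightarrow> jidx l i \<le> jidx l k" unfolding jidx_def by simp

theorem proposition3p1:
  fixes A :: "real^'n^'m" and b :: "real^'m" and l :: nat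
    and S :: "nat \<Rightarrow> real^'q^'m" and x :: "nat \<Rightarrow> real^'n" and k :: nat
  assumes consistent: "\<exists>z. A *v z = b"
    and l_pos: "l > 0"
    and x0_range: "x 0 \<in> range (\<lambda>y. transpose A *v y)"
    and recursion: "\<And>i. is_arg_min (\<lambda>z. (norm (z - pinv A *v b))\<^sup>2)
                              (\<lambda>z. z \<in> Pi_set A b S l x i) (x (Suc i))"
    and nonzero: "\<And>i. i \<le> k \<Longrightarrow> transpose (S i) *v (A *v x i - b) \<noteq> 0"
  shows "full_col_rank (Mcols A b S l x k)"
proof -
  define c where "c = pinv A *v b"
  have Ac: "A *v c = b" unfolding c_def using consistent by (rule pinv_solves)
  define d where "d i = sdir A b (S i) (x i)" for i
  have aff: "affine (Pi_set A b S l x i)" for i unfolding Pi_set_def by simp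
  have rec: "x (Suc i) \<in> Pi_set A b S l x i" for i
    using recursion[of i] unfolding is_arg_min_def by simp
  have memx: "x j \<in> Pi_set A b S l x i" if "jidx l i \<le> j" "j \<le> i" for i j
    unfolding Pi_set_def by (rule hull_inc) (use that in auto)
  have memd: "x i - d i \<in> Pi_set A b S l x i" for i
    unfolding Pi_set_def d_def by (rule hull_inc) auto
  have O: "inner (y - y') (x (Suc i) - c) = 0"
    if "y \<in> Pi_set A b S l x i" "y' \<in> Pi_set A b S l x i" for i y y'
  proof -
    have "inner (y - x (Suc i)) (x (Suc i) - c) = 0"
      using argmin_orth[OF recursion[of i, folded c_def] aff that(1)] .
    moreover have "inner (y' - x (Suc i)) (x (Suc i) - c) = 0"
      using argmin_orth[OF recursion[of i, folded c_def] aff that(2)] .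
    ultimately show ?thesis by (simp add: inner_diff_left)
  qed
  have G: "inner (d i) (x i - c) > 0" if "i \<le> k" for i
  proof -
    define r where "r = A *v x i - b"
    have "inner (d i) (x i - c) = inner ((S i ** transpose (S i)) *v r) (A *v (x i - c))"
      unfolding d_def sdir_def r_def by (rule tA_inner)
    also have "A *v (x i - c) = r" unfolding r_def using Ac by (simp add: matrix_vector_mult_diff_distrib)
    also have "inner ((S i ** transpose (S i)) *v r) r = inner (transpose (S i) *v r) (transpose (S i) *v r)"
      by (simp only: A_inner flip: matrix_vector_mul_assoc)
    also have "\<dots> > 0" using nonzero[OF that] unfolding r_def by simp
    finally show ?thesis .
  qed
  have D: "x (Suc q) \<noteq> x q" if "q \<le> k" for q
  proof
    assume eq: "x (Suc q) = x q"
    have "inner (x q - (x q - d q)) (x (Suc q) - c) = 0"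
      using O[OF memx[of q q] memd] jidx_le[OF l_pos] by simp
    then have "inner (d q) (x q - c) = 0" using eq by simp
    then show False using G[OF that] by simp
  qed
  define s where "s = jidx l k"
  have W: "inner (x j - x p) (x p - c) = 0" if Wh: "s \<le> j" "j \<le> p" "p \<le> k" for j p
  proof (cases "j = p")
    case True then show ?thesis by simp
  next
    case False
    then obtain q where q: "p = Suc q" using Wh(2) False by (cases p) auto
    have "jidx l q \<le> s" unfolding s_def using q Wh by (intro jidx_mono) simp
    then have "x j \<in> Pi_set A b S l x q" using Wh False q by (intro memx) auto
    from O[OF this rec[of q]] show ?thesis using q by simp
  qed
  have AI: "\<forall>a. (\<Sum>i<dd. a i *\<^sub>R (x (s+i) - x (s+dd))) = 0 \<longrightarrow> (\<forall>i<dd. a i = 0)"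
    if "s + dd \<le> k" for dd
    using that
  proof (induction dd)
    case 0 then show ?case by simp
  next
    case (Suc dd)
    define p where "p = s + dd"
    have pk: "p < k" using Suc.prems p_def by simp
    show ?case
    proof (rule allI, rule impI)
      fix a assume sa: "(\<Sum>i<Suc dd. a i *\<^sub>R (x (s+i) - x (s + Suc dd))) = 0"
      define \<delta> where "\<delta> = x p - x (Suc p)"
      have split: "(\<Sum>i<Suc dd. a i *\<^sub>R (x (s+i) - x (s + Suc dd)))
          = (\<Sum>i<Suc dd. a i *\<^sub>R (x (s+i) - x p)) + (\<Sum>i<Suc dd. a i) *\<^sub>R \<delta>"
        unfolding \<delta>_def p_def by (simp add: scaleR_sum_left sum.distrib[symmetric] algebra_simps)
      have z: "(\<Sum>i<Suc dd. a i *\<^sub>R (x (s+i) - x p)) + (\<Sum>i<Suc dd. a i) *\<^sub>R \<delta> = 0"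
        using sa split by simp
      have "inner (\<Sum>i<Suc dd. a i *\<^sub>R (x (s+i) - x p)) (x p - c) = 0"
        unfolding inner_sum_left using W pk unfolding p_def by (intro sum.neutral) auto
      then have i1: "(\<Sum>i<Suc dd. a i) * inner \<delta> (x p - c) = 0"
        using arg_cong[OF z, of "\<lambda>v. inner v (x p - c)"] by (simp add: inner_add_left)
      have i2: "inner \<delta> (x (Suc p) - c) = 0"
        unfolding \<delta>_def using O[OF memx[of p p] rec[of p]] jidx_le[OF l_pos] by simp
      have "inner \<delta> (x p - c) \<noteq> 0"
      proof
        assume "inner \<delta> (x p - c) = 0"
        then have "inner \<delta> ((x p - c) - (x (Suc p) - c)) = 0" using i2 by (simp add: inner_diff_right)
        then have "inner \<delta> \<delta> = 0" unfolding \<delta>_def by simp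
        then have "x (Suc p) = x p" unfolding \<delta>_def by simp
        then show False using D[of p] pk by simp
      qed
      then have sum0: "(\<Sum>i<Suc dd. a i) = 0" using i1 by simp
      then have "(\<Sum>i<Suc dd. a i *\<^sub>R (x (s+i) - x p)) = 0" using z by simp
      then have "(\<Sum>i<dd. a i *\<^sub>R (x (s+i) - x (s+dd))) = 0" unfolding p_def by simp
      then have low: "\<forall>i<dd. a i = 0" using Suc.IH Suc.prems by simp
      then have "(\<Sum>i<dd. a i) = 0" by simp
      then have "a dd = 0" using sum0 by simp
      then show "\<forall>i<Suc dd. a i = 0" using low less_Suc_eq by auto
    qed
  qed
  let ?cols = "Mcols A b S l x k"
  have sk: "s \<le> k" unfolding s_def using jidx_le[OF l_pos] .
  have len: "length ?cols = Suc (k - s)" unfolding Mcols_def s_def by simp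
  have nth1: "?cols ! i = x (s + i) - x k" if "i < k - s" for i
    unfolding Mcols_def s_def using that by (simp add: nth_append s_def)
  have nth2: "?cols ! (k - s) = - d k"
    unfolding Mcols_def s_def d_def by (simp add: nth_append)
  show ?thesis
  proof (rule full_rank_crit)
    fix a assume h: "(\<Sum>i<length ?cols. a i *\<^sub>R ?cols ! i) = 0"
    have "(\<Sum>i<length ?cols. a i *\<^sub>R ?cols ! i)
        = (\<Sum>i<k - s. a i *\<^sub>R (x (s + i) - x k)) - a (k - s) *\<^sub>R d k"
      unfolding len using nth1 nth2 by simp
    then have z: "(\<Sum>i<k - s. a i *\<^sub>R (x (s + i) - x k)) - a (k - s) *\<^sub>R d k = 0" using h by simp
    have "inner (\<Sum>i<k - s. a i *\<^sub>R (x (s + i) - x k)) (x k - c) = 0"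
      unfolding inner_sum_left using W sk by (intro sum.neutral) auto
    then have "a (k - s) * inner (d k) (x k - c) = 0"
      using arg_cong[OF z, of "\<lambda>v. inner v (x k - c)"] by (simp add: inner_diff_left)
    then have last: "a (k - s) = 0" using G[of k] by simp
    then have "(\<Sum>i<k - s. a i *\<^sub>R (x (s + i) - x (s + (k - s)))) = 0" using z sk by simp
    then have "\<forall>i<k - s. a i = 0" using AI[of "k - s"] sk by simp
    then show "\<forall>i<length ?cols. a i = 0" unfolding len using last less_Suc_eq by auto
  qed
qed

end
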